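(* Let $f:\mathbb{R}\to\mathbb{R}\cup\{\pm\infty\}$ be a proper concave function such that $f(\delta)\le0$ and $\partial f(\delta)\cap\mathbb{R}_{<0}\ne\emptyset$ for some $\delta\in\operatorname{dom}(f)$, and such that $f$ has a root or attains its maximum; let $\delta^*:=\max(\{\delta:f(\delta)=0\}\cup\operatorname{argmax}f)$. Run the (standard) Newton–Dinkelbach method described in the context. Then for every iteration $i\ge2$: $\delta^*\le\delta^{(i)}<\delta^{(i-1)}$, $f(\delta^* )\ge f(\delta^{(i)})>f(\delta^{(i-1)})$, and $g^{(i)}\ge g^{(i-1)}$, where the last inequality holds with equality if and only if $g^{(i)}=\inf_{g\in\partial f(\delta^{(i)})}g$, $g^{(i-1)}=\sup_{g\in\partial f(\delta^{(i-1)})}g$ and $f(\delta^{(i)})=0$. Moreover, \[ \frac{f(\delta^{(i)})}{f(\delta^{(i-1)})}+\frac{g^{(i)}}{g^{(i-1)}}\le1. \]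
   Context: $\operatorname{dom}(f):=\{x:-\infty<f(x)<\infty\}$; $\partial f(x_0):=\{g: f(x)\le f(x_0)+g(x-x_0)\ \forall x\in\mathbb{R}\}$. Newton–Dinkelbach method: given oracles returning $f(\delta)$ and some $g\in\partial f(\delta)$, input $\delta^{(1)}\in\operatorname{dom}(f)$, $g^{(1)}\in\partial f(\delta^{(1)})$ with $f(\delta^{(1)})\le0$, $g^{(1)}<0$. At iteration $i\ge1$: if $f(\delta^{(i)})=0$ return $\delta^{(i)}$; otherwise let $\delta:=\delta^{(i)}-f(\delta^{(i)})/g^{(i)}$ and $g\in\partial f(\delta)$ from the oracle; if $f(\delta)=-\infty$, or $f(\delta)<0$ and $g\ge0$, stop and report no root; otherwise set $\delta^{(i+1)}:=\delta$, $g^{(i+1)}:=g$. "Iteration $i$" refers to an iteration at whose start $\delta^{(i)},g^{(i)}$ are defined. *)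

theory Defs
  imports "HOL-Analysis.Analysis"
begin

definition edom :: "(real \<Rightarrow> ereal) \<Rightarrow> real set" where
  "edom f = {x. -\<infinity> < f x \<and> f x < \<infinity>}"

text \<open>Superdifferential (subdifferential in the concave sense, as in the paper).\<close>
definition superdiff :: "(real \<Rightarrow> ereal) \<Rightarrow> real \<Rightarrow> real set" where
  "superdiff f x0 = {g. \<forall>x. f x \<le> f x0 + ereal (g * (x - x0))}"

definition concave_efun :: "(real \<Rightarrow> ereal) \<Rightarrow> bool" where
  "concave_efun f \<longleftrightarrow> convex {(x, r :: real). ereal r \<le> f x}"

definition proper_concave :: "(real \<Rightarrow> ereal) \<Rightarrow> bool" where
  "proper_concave f \<longleftrightarrow> concave_efun f \<and> (\<forall>x. f x < \<infinity>) \<and> (\<exists>x. -\<infinity> < f x)"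

definition eargmax :: "(real \<Rightarrow> ereal) \<Rightarrow> real set" where
  "eargmax f = {x. \<forall>y. f y \<le> f x}"

definition nd_delta_star :: "(real \<Rightarrow> ereal) \<Rightarrow> real" where
  "nd_delta_star f = (GREATEST d. d \<in> {d. f d = 0} \<union> eargmax f)"

text \<open>nd_reached f dl g i: the sequences dl, g are a run of the Newton--Dinkelbach method
  (with the oracle's subgradient choices g) and iteration i is reached, i.e. dl i, g i are
  defined: the input conditions hold and for every iteration k with 1 \<le> k < i the method
  did not stop and produced dl (k+1), g (k+1).\<close>
definition nd_reached :: "(real \<Rightarrow> ereal) \<Rightarrow> (nat \<Rightarrow> real) \<Rightarrow> (nat \<Rightarrow> real) \<Rightarrow> nat \<Rightarrow> bool" where
  "nd_reached f dl g i \<longleftrightarrow>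
     dl 1 \<in> edom f \<and> g 1 \<in> superdiff f (dl 1) \<and> f (dl 1) \<le> 0 \<and> g 1 < 0 \<and>
     (\<forall>k. 1 \<le> k \<and> k < i \<longrightarrow>
        f (dl k) \<noteq> 0 \<and>
        dl (Suc k) = dl k - real_of_ereal (f (dl k)) / g k \<and>
        g (Suc k) \<in> superdiff f (dl (Suc k)) \<and>
        \<not> (f (dl (Suc k)) = -\<infinity> \<or> (f (dl (Suc k)) < 0 \<and> g (Suc k) \<ge> 0)))"

end

theory Submission
  imports Defs
begin

lemma hypo_comb:
  assumes conc: "concave_efun f" and xy: "x < y" and yz: "y < z"
    and fx: "ereal u \<le> f x" and fz: "ereal v \<le> f z"
  shows "ereal (((z - y) * u + (y - x) * v) / (z - x)) \<le> f y"
proof -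
  let ?H = "{(x, r :: real). ereal r \<le> f x}"
  have cv: "convex ?H" using conc unfolding concave_efun_def .
  have m1: "(x,u) \<in> ?H" and m2: "(z,v) \<in> ?H" using fx fz by auto
  define t where "t = (y-x)/(z-x)"
  have t0: "0 \<le> t" "0 \<le> 1 - t" using xy yz by (auto simp: t_def field_simps)
  have "(1-t) *\<^sub>R (x,u) + t *\<^sub>R (z,v) \<in> ?H"
    using convexD[OF cv m1 m2 t0(2) t0(1)] by simp
  moreover have "(1-t) *\<^sub>R (x,u) + t *\<^sub>R (z,v) = (y, ((z - y) * u + (y - x) * v) / (z - x))"
  proof -
    have zx: "z - x \<noteq> 0" using xy yz by simp
    have tz: "t * (z - x) = y - x" unfolding t_def using zx by simp
    have "(1-t) * x + t * z = x + t * (z - x)" by (simp add: algebra_simps)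
    hence "(1-t) * x + t * z = y" using tz by simp
    moreover have "(1-t) * u + t * v = ((z - y) * u + (y - x) * v) / (z - x)"
    proof -
      have "(z - y) / (z - x) = ((z - x) - (y - x)) / (z - x)" by simp
      also have "\<dots> = 1 - t" unfolding t_def 
        unfolding t_def diff_divide_distrib[of "z - x" "y - x" "z - x"] divide_self[OF zx] ..
      finally have "1 - t = (z - y) / (z - x)" by simp
      thus ?thesis unfolding t_def by (simp add: add_divide_distrib)
    qed
    ultimately show ?thesis by simp
  qed
  ultimately show ?thesis by simp
qed

lemma K:
  assumes conc: "concave_efun f" and fin: "\<And>x. f x < \<infinity>"
    and sa: "\<sigma> < a" and fa: "f a = ereal A"
    and T: "\<And>s. s \<in> T \<Longrightarrow> ereal c \<le> f s"
    and appr: "\<And>e. e > 0 \<Longrightarrow> \<exists>s\<in>T. \<sigma> - e < s \<and> s < \<sigma>"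
  shows "ereal c \<le> f \<sigma>"
proof (rule ccontr)
  assume nc: "\<not> ereal c \<le> f \<sigma>"
  obtain s0 where s0: "s0 \<in> T" "\<sigma> - 1 < s0" "s0 < \<sigma>" using appr[of 1] by auto
  have "ereal (((a-\<sigma>)*c + (\<sigma>-s0)*A)/(a-s0)) \<le> f \<sigma>"
    using hypo_comb[OF conc s0(3) sa] T[OF s0(1)] fa by simp
  then obtain w where w: "f \<sigma> = ereal w" using fin[of \<sigma>] by (cases "f \<sigma>") auto
  with nc have wc: "w < c" by simp
  show False
  proof (cases "A \<ge> c")
    case True
    have "ereal (((a-\<sigma>)*c + (\<sigma>-s0)*c)/(a-s0)) \<le> f \<sigma>"
      using hypo_comb[OF conc s0(3) sa, of c c] T[OF s0(1)] fa True by simp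
    moreover have "((a-\<sigma>)*c + (\<sigma>-s0)*c)/(a-s0) = c" using s0 sa by (simp add: field_simps)
    ultimately show False using nc by simp
  next
    case False
    define e where "e = (c-w)*(a-\<sigma>)/(c-A)"
    have e: "e > 0" using False wc sa by (simp add: e_def)
    obtain s where s: "s\<in>T" "\<sigma> - e < s" "s < \<sigma>" using appr[OF e] by auto
    have "ereal (((a-\<sigma>)*c + (\<sigma>-s)*A)/(a-s)) \<le> f \<sigma>"
      using hypo_comb[OF conc s(3) sa, of c A] T[OF s(1)] fa by simp
    hence le: "((a-\<sigma>)*c + (\<sigma>-s)*A)/(a-s) \<le> w" using w by simp
    have eq: "((a-\<sigma>)*c + (\<sigma>-s)*A)/(a-s) = c - (\<sigma>-s)*(c-A)/(a-s)"
      using s sa by (simp add: field_simps)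
    have l1: "(\<sigma>-s)*(c-A)/(a-s) \<le> (\<sigma>-s)*(c-A)/(a-\<sigma>)"
      using s sa False by (intro divide_left_mono) auto
    have "(\<sigma>-s)*(c-A) < (c-w)*(a-\<sigma>)"
      using s(2) False unfolding e_def by (simp add: field_simps)
    hence l2: "(\<sigma>-s)*(c-A)/(a-\<sigma>) < c - w" using sa by (simp add: field_simps)
    show False using le eq l1 l2 by linarith
  qed
qed

lemma E:
  assumes conc: "concave_efun f" and fin: "\<And>x. f x < \<infinity>"
    and S_def: "S = {d. f d = 0} \<union> eargmax f"
    and ne: "S \<noteq> {}" and bd: "\<And>s. s \<in> S \<Longrightarrow> s \<le> b"
    and ba: "b < a" and fa: "f a = ereal A"
  shows "\<exists>\<sigma>\<in>S. \<forall>s\<in>S. s \<le> \<sigma>"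
proof -
  have bdd: "bdd_above S" using bd by (rule bdd_aboveI)
  define \<sigma> where "\<sigma> = Sup S"
  have up: "\<And>s. s\<in>S \<Longrightarrow> s \<le> \<sigma>" using cSup_upper bdd \<sigma>_def by blast
  have \<sigma>b: "\<sigma> \<le> b" unfolding \<sigma>_def using cSup_least[OF ne] bd by blast
  have \<sigma>a: "\<sigma> < a" using \<sigma>b ba by simp
  show ?thesis
  proof (cases "\<sigma> \<in> S")
    case True thus ?thesis using up by blast
  next
    case False
    have appr: "\<exists>s\<in>S. \<sigma> - e < s \<and> s < \<sigma>" if e: "e > 0" for e :: real
    proof -
      have "\<sigma> - e < Sup S" using \<sigma>_def e by simp
      then obtain s where s: "s\<in>S" "\<sigma> - e < s" using less_cSup_iff[OF ne bdd] by auto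
      moreover have "s < \<sigma>" using up[OF s(1)] False s(1) by (cases "s = \<sigma>") auto
      ultimately show ?thesis by blast
    qed
    show ?thesis
    proof (cases "\<exists>s0\<in>S. s0 < \<sigma> \<and> (\<forall>s\<in>S. s0 < s \<longrightarrow> s \<in> eargmax f)")
      case True
      then obtain s0 where s0: "s0\<in>S" "s0<\<sigma>" "\<forall>s\<in>S. s0 < s \<longrightarrow> s \<in> eargmax f" by blast
      obtain p where p: "p\<in>S" "\<sigma> - (\<sigma> - s0) < p" "p < \<sigma>" using appr[of "\<sigma> - s0"] s0(2) by auto
      have pm: "p \<in> eargmax f" using s0(3) p by simp
      have "f a \<le> f p" using pm unfolding eargmax_def by simp
      then obtain m where m: "f p = ereal m" using fa fin[of p] by (cases "f p") auto
      have "ereal m \<le> f \<sigma>"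
      proof (rule K[OF conc fin \<sigma>a fa, where T = "{s\<in>S. s0 < s}"])
        fix s assume "s \<in> {s\<in>S. s0<s}" hence "s\<in>eargmax f" using s0(3) by auto
        hence "f p \<le> f s" unfolding eargmax_def by simp
        thus "ereal m \<le> f s" using m by simp
      next
        fix e :: real assume "e>0"
        then obtain s where "s\<in>S" "\<sigma> - min e (\<sigma> - s0) < s" "s<\<sigma>" using appr[of "min e (\<sigma>-s0)"] s0(2) by auto
        thus "\<exists>s\<in>{s\<in>S. s0<s}. \<sigma> - e < s \<and> s < \<sigma>" by auto
      qed
      hence "\<forall>y. f y \<le> f \<sigma>" using pm m unfolding eargmax_def
        using order_trans by (metis mem_Collect_eq)
      hence "\<sigma> \<in> eargmax f" unfolding eargmax_def by simp
      thus ?thesis using False S_def by simp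
    next
      case False2: False
      have zappr: "\<exists>z. f z = 0 \<and> \<sigma> - e < z \<and> z < \<sigma>" if e: "e > 0" for e :: real
      proof -
        obtain s0 where s0: "s0\<in>S" "\<sigma> - e < s0" "s0<\<sigma>" using appr[OF e] by auto
        with False2 obtain z where z: "z\<in>S" "s0 < z" "z \<notin> eargmax f" by blast
        hence "f z = 0" using S_def by auto
        moreover have "z < \<sigma>" using up[OF z(1)] z(1) False by (cases "z=\<sigma>") auto
        ultimately show ?thesis using s0 z by auto
      qed
      have ge: "ereal 0 \<le> f \<sigma>"
        by (rule K[OF conc fin \<sigma>a fa, where T="{z. f z = 0}"]) (use zappr in auto)
      obtain z1 where z1: "f z1 = 0" "\<sigma> - 1 < z1" "z1 < \<sigma>" using zappr[of 1] by auto
      obtain z2 where z2: "f z2 = 0" "\<sigma> - (\<sigma> - z1) < z2" "z2 < \<sigma>" using zappr[of "\<sigma> - z1"] z1 by auto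
      obtain w where w: "f \<sigma> = ereal w" using ge fin[of \<sigma>] by (cases "f \<sigma>") auto
      have w0: "0 \<le> w" using ge w by simp
      have z12: "z1 < z2" using z2 by simp
      have "ereal (((\<sigma> - z2) * 0 + (z2 - z1) * w) / (\<sigma> - z1)) \<le> f z2"
        using hypo_comb[OF conc z12 z2(3), of 0 w] z1 z2 w by simp
      hence "(z2 - z1) * w / (\<sigma> - z1) \<le> 0" using z2(1) by simp
      hence "w \<le> 0" using z12 z2(3)
      proof -
        assume h: "(z2 - z1) * w / (\<sigma> - z1) \<le> 0"
        show "w \<le> 0"
        proof (rule ccontr)
          assume "\<not> w \<le> 0"
          hence "(z2 - z1) * w / (\<sigma> - z1) > 0" using z12 z2(3) by simp
          thus False using h by simp
        qed
      qed
      hence "f \<sigma> = 0" using w w0 by simp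
      thus ?thesis using False S_def by simp
    qed
  qed
qed

lemma inv:
  assumes fin: "\<And>x. f x < \<infinity>" and R: "nd_reached f dl g i"
  shows "1 \<le> k \<Longrightarrow> k \<le> i \<Longrightarrow> f (dl k) \<noteq> -\<infinity> \<and> f (dl k) \<le> 0 \<and> (f (dl k) < 0 \<longrightarrow> g k < 0) \<and> g k \<in> superdiff f (dl k)"
proof (induction k)
  case 0 then show ?case by simp
next
  case (Suc k)
  show ?case
  proof (cases "k = 0")
    case True
    thus ?thesis using R unfolding nd_reached_def edom_def by auto
  next
    case False
    hence k1: "1 \<le> k" "k < i" using Suc by auto
    have IH: "f (dl k) \<noteq> -\<infinity>" "f (dl k) \<le> 0" "f (dl k) < 0 \<longrightarrow> g k < 0" "g k \<in> superdiff f (dl k)"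
      using Suc k1 by auto
    have st: "f (dl k) \<noteq> 0" "dl (Suc k) = dl k - real_of_ereal (f (dl k)) / g k"
        "g (Suc k) \<in> superdiff f (dl (Suc k))"
        "\<not> (f (dl (Suc k)) = -\<infinity> \<or> (f (dl (Suc k)) < 0 \<and> g (Suc k) \<ge> 0))"
      using R k1 unfolding nd_reached_def by auto
    obtain F where F: "f (dl k) = ereal F" using IH(1) fin[of "dl k"] by (cases "f (dl k)") auto
    have F0: "F < 0" using F IH(2) st(1) by simp
    have G0: "g k < 0" using IH(3) F F0 by simp
    have "f (dl (Suc k)) \<le> f (dl k) + ereal (g k * (dl (Suc k) - dl k))"
      using IH(4) unfolding superdiff_def by blast
    also have "g k * (dl (Suc k) - dl k) = - F" using st(2) F G0 by simp
    finally have "f (dl (Suc k)) \<le> 0" using F by (simp, metis zero_ereal_def)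
    thus ?thesis using st by auto
  qed
qed


theorem lemma3p1:
  fixes f :: "real \<Rightarrow> ereal" and dl g :: "nat \<Rightarrow> real" and i :: nat
  assumes "proper_concave f"
    and "\<exists>d\<in>edom f. f d \<le> 0 \<and> (\<exists>s\<in>superdiff f d. s < 0)"
    and "(\<exists>d. f d = 0) \<or> (\<exists>d. \<forall>y. f y \<le> f d)"
    and "nd_reached f dl g i"
    and "i \<ge> 2"
  shows "nd_delta_star f \<le> dl i \<and> dl i < dl (i - 1)
    \<and> f (nd_delta_star f) \<ge> f (dl i) \<and> f (dl i) > f (dl (i - 1))
    \<and> g i \<ge> g (i - 1)
    \<and> (g i = g (i - 1) \<longleftrightarrow>
         g i = Inf (superdiff f (dl i)) \<and> g (i - 1) = Sup (superdiff f (dl (i - 1)))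
         \<and> f (dl i) = 0)
    \<and> real_of_ereal (f (dl i)) / real_of_ereal (f (dl (i - 1))) + g i / g (i - 1) \<le> 1"
proof -
  have conc: "concave_efun f" and fin: "\<And>x. f x < \<infinity>"
    using assms(1) unfolding proper_concave_def by auto
  note R = assms(4)
  obtain j where ij: "i = Suc j" and j1: "1 \<le> j" using assms(5) by (cases i) auto
  have ji: "i - 1 = j" using ij by simp
  define a where "a = dl j"
  define b where "b = dl i"
  have Ij: "f a \<noteq> -\<infinity>" "f a \<le> 0" "f a < 0 \<longrightarrow> g j < 0" "g j \<in> superdiff f a"
    using inv[OF fin R, of j] j1 ij unfolding a_def by auto
  have Ii: "f b \<noteq> -\<infinity>" "f b \<le> 0" "f b < 0 \<longrightarrow> g i < 0" "g i \<in> superdiff f b"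
    using inv[OF fin R, of i] ij unfolding b_def by auto
  have stj: "f a \<noteq> 0" "b = a - real_of_ereal (f a) / g j"
    using R j1 ij unfolding nd_reached_def a_def b_def by auto
  obtain F where F: "f a = ereal F" using Ij(1) fin[of a] by (cases "f a") auto
  have F0: "F < 0" using F Ij(2) stj(1) by (simp add: zero_ereal_def)
  have G0: "g j < 0" using Ij(3) F F0 by simp
  obtain B where B: "f b = ereal B" using Ii(1) fin[of b] by (cases "f b") auto
  have B0: "B \<le> 0" using B Ii(2) by (simp add: zero_ereal_def)
  have Bg: "B < 0 \<Longrightarrow> g i < 0" using Ii(3) B by simp
  have bdef: "b = a - F / g j" using stj(2) F by simp
  have gab: "g j * (a - b) = F" using bdef G0 by simp
  have h1: "B \<le> F + g j * (b - a)"
  proof -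
    have "f b \<le> f a + ereal (g j * (b - a))" using Ij(4) unfolding superdiff_def by blast
    thus ?thesis using F B by simp
  qed
  have h2: "F \<le> B + g i * (a - b)"
  proof -
    have "f a \<le> f b + ereal (g i * (a - b))" using Ii(4) unfolding superdiff_def by blast
    thus ?thesis using F B by simp
  qed
  have abpos: "a - b > 0"
  proof -
    have "F / g j > 0" using F0 G0 by (simp add: divide_neg_neg)
    thus ?thesis using bdef by simp
  qed
  have c1: "b < a" using abpos by simp
  have c2: "F < B"
  proof (cases "B = 0")
    case True thus ?thesis using F0 by simp
  next
    case False
    hence "g i < 0" using Bg B0 by simp
    hence "g i * (a - b) < 0" using abpos by (simp add: mult_neg_pos)
    thus ?thesis using h2 by simp
  qed
  have c3: "g j \<le> g i"
  proof -
    have "0 \<le> (g i - g j) * (a - b)" using h1 h2 by (simp add: algebra_simps)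
    thus ?thesis using abpos by (simp add: zero_le_mult_iff)
  qed
  have c4: "B / F + g i / g j \<le> 1"
  proof -
    have amb: "a - b = F / g j" using bdef by simp
    have e1: "B / F + g i / g j = (B + g i * (a - b)) / F"
      unfolding amb using F0 G0 by (simp add: field_simps)
    have "(B + g i * (a - b)) / F \<le> F / F"
      using h2 F0 by (intro divide_right_mono_neg) auto
    thus ?thesis using e1 F0 by simp
  qed
  have sdb: "g j \<in> superdiff f b" if B00: "B = 0"
    unfolding superdiff_def
  proof (intro CollectI allI)
    fix x
    have "f x \<le> f a + ereal (g j * (x - a))" using Ij(4) unfolding superdiff_def by blast
    moreover have "F + g j * (x - a) = B + g j * (x - b)"
      using gab B00 by (simp add: algebra_simps)
    ultimately show "f x \<le> f b + ereal (g j * (x - b))" using F B by simp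
  qed
  have lb: "g j \<le> h" if B00: "B = 0" and hs: "h \<in> superdiff f b" for h
  proof -
    have "f a \<le> f b + ereal (h * (a - b))" using hs unfolding superdiff_def by blast
    hence "F \<le> B + h * (a - b)" using F B by simp
    hence "g j * (a - b) \<le> h * (a - b)" using gab B00 by simp
    thus ?thesis using abpos by simp
  qed
  have ub: "h \<le> g j" if B00: "B = 0" and hs: "h \<in> superdiff f a" for h
  proof -
    have "f b \<le> f a + ereal (h * (b - a))" using hs unfolding superdiff_def by blast
    hence "B \<le> F + h * (b - a)" using F B by simp
    hence "h * (a - b) \<le> g j * (a - b)" using gab B00 by (simp add: algebra_simps)
    thus ?thesis using abpos by simp
  qed
  have c5: "g i = g j \<longleftrightarrow> g i = Inf (superdiff f b) \<and> g j = Sup (superdiff f a) \<and> f b = 0"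
  proof
    assume eq: "g i = g j"
    have "F \<le> B + F" using h2 eq gab by simp
    hence B00: "B = 0" using B0 by simp
    have "Inf (superdiff f b) = g j" by (rule cInf_eq_minimum[OF sdb[OF B00] lb[OF B00]])
    moreover have "Sup (superdiff f a) = g j" by (rule cSup_eq_maximum[OF Ij(4) ub[OF B00]])
    ultimately show "g i = Inf (superdiff f b) \<and> g j = Sup (superdiff f a) \<and> f b = 0"
      using eq B B00 by simp
  next
    assume h: "g i = Inf (superdiff f b) \<and> g j = Sup (superdiff f a) \<and> f b = 0"
    hence B00: "B = 0" using B by (simp add: zero_ereal_def)
    have "Inf (superdiff f b) = g j" by (rule cInf_eq_minimum[OF sdb[OF B00] lb[OF B00]])
    thus "g i = g j" using h by simp
  qed
  have gt: "f x < f b" if xb: "x > b" for x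
  proof (cases "B = 0")
    case True
    have "f x \<le> f a + ereal (g j * (x - a))" using Ij(4) unfolding superdiff_def by blast
    moreover have "F + g j * (x - a) = g j * (x - b)" using gab by (simp add: algebra_simps)
    moreover have "g j * (x - b) < 0" using G0 xb by (simp add: mult_neg_pos)
    ultimately have "f x \<le> ereal (g j * (x - b))" "ereal (g j * (x - b)) < ereal B"
      using F B True by simp_all
    thus ?thesis using B by (metis le_less_trans)
  next
    case False
    hence gi: "g i < 0" using Bg B0 by simp
    have "f x \<le> f b + ereal (g i * (x - b))" using Ii(4) unfolding superdiff_def by blast
    moreover have "g i * (x - b) < 0" using gi xb by (simp add: mult_neg_pos)
    ultimately have "f x \<le> ereal (B + g i * (x - b))" "ereal (B + g i * (x - b)) < ereal B"
      using B by simp_all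
    thus ?thesis using B by (metis le_less_trans)
  qed
  define S where "S = {d. f d = 0} \<union> eargmax f"
  have bd: "s \<le> b" if sS: "s \<in> S" for s
  proof (rule ccontr)
    assume "\<not> s \<le> b"
    hence lt: "f s < f b" using gt by simp
    show False
    proof (cases "f s = 0")
      case True thus False using lt B B0 by (simp add: zero_ereal_def)
    next
      case False
      hence "s \<in> eargmax f" using sS S_def by simp
      hence "f b \<le> f s" unfolding eargmax_def by simp
      thus False using lt by simp
    qed
  qed
  have ne: "S \<noteq> {}" using assms(3) unfolding S_def eargmax_def by auto
  obtain \<sigma> where \<sigma>: "\<sigma> \<in> S" "\<forall>s\<in>S. s \<le> \<sigma>"
    using E[OF conc fin S_def ne bd c1 F] by blast
  have ds: "nd_delta_star f = \<sigma>"
    unfolding nd_delta_star_def using \<sigma> S_def by (intro Greatest_equality) auto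
  have d1: "\<sigma> \<le> b" using bd \<sigma>(1) by simp
  have d2: "f b \<le> f \<sigma>"
  proof (cases "f \<sigma> = 0")
    case True thus ?thesis using B B0 by (simp add: zero_ereal_def)
  next
    case False
    hence "\<sigma> \<in> eargmax f" using \<sigma>(1) S_def by simp
    thus ?thesis unfolding eargmax_def by simp
  qed
  show ?thesis
    unfolding ji ds using d1 d2 c1 c2 c3 c4 c5 F B
    unfolding a_def[symmetric] b_def[symmetric] by simp
qed

end
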